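(* There is a constant $c$ independent of $f$ and $n$ such that for all integers $n\ge 2$ the operator norm of $S_n: C(\overline{\Omega}_H)\to C(\overline{\Omega}_H)$ (with respect to the uniform norm on $\overline{\Omega}_H$) satisfies $$\|S_n\|_\infty\le c(\log n)^3 .$$
   Context: Let $\mathbb R^4_H=\{\mathbf t\in\mathbb R^4: t_1+t_2+t_3+t_4=0\}$, equipped with its 3-dimensional Lebesgue measure $d\mathbf t$, and $\mathbb Z^4_H=\mathbb Z^4\cap\mathbb R^4_H$. Let $\Omega_H=\{\mathbf t\in\mathbb R^4_H: -1<t_i-t_j\le 1,\ 1\le i<j\le 4\}$ (a rhombic dodecahedron, of volume $2$), with closure $\overline\Omega_H$. A function $f$ on $\mathbb R^4_H$ is called $H$-periodic if $f(\mathbf t+\mathbf k)=f(\mathbf t)$ for all $\mathbf k\in\mathbb Z^4_H$; functions on $\overline\Omega_H$ are identified with their $H$-periodic extensions. Let $\mathbb H=\{\mathbf k\in\mathbb Z^4_H: k_1\equiv k_2\equiv k_3\equiv k_4 \pmod 4\}$, $\phi_{\mathbf k}(\mathbf t)=e^{\frac{\pi i}{2}\mathbf k\cdot\mathbf t}$, and $\langle f,g\rangle=\frac12\int_{\Omega_H}f(\mathbf t)\overline{g(\mathbf t)}\,d\mathbf t$. Let $\mathbb H_n^*=\{\mathbf k\in\mathbb H: -4n\le k_i-k_j\le 4n,\ 1\le i<j\le 4\}$. The dodecahedral Fourier partial sum is $S_nf(\mathbf t)=\sum_{\mathbf k\in\mathbb H_n^*}\langle f,\phi_{\mathbf k}\rangle\phi_{\mathbf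 k}(\mathbf t)$. *)

theory Defs
  imports "HOL-Analysis.Analysis"
begin

definition idx_pairs :: "(4 \<times> 4) list" where
  "idx_pairs = [(1,2),(1,3),(1,4),(2,3),(2,4),(3,4)]"

definition RH :: "(real^4) set" where
  "RH = {t. (\<Sum>i\<in>UNIV. t$i) = 0}"

definition ZH :: "(int^4) set" where
  "ZH = {k. (\<Sum>i\<in>UNIV. k$i) = 0}"

definition vec_of_int :: "int^4 \<Rightarrow> real^4" where
  "vec_of_int k = (\<chi> i. real_of_int (k$i))"

definition OmegaH :: "(real^4) set" where
  "OmegaH = {t \<in> RH. \<forall>(i,j)\<in>set idx_pairs. -1 < t$i - t$j \<and> t$i - t$j \<le> 1}"

definition H_periodic :: "(real^4 \<Rightarrow> complex) \<Rightarrow> bool" where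
  "H_periodic f \<longleftrightarrow> (\<forall>t\<in>RH. \<forall>k\<in>ZH. f (t + vec_of_int k) = f t)"

definition Hlat :: "(int^4) set" where
  "Hlat = {k \<in> ZH. \<forall>i j. k$i mod 4 = k$j mod 4}"

definition phi :: "int^4 \<Rightarrow> real^4 \<Rightarrow> complex" where
  "phi k t = exp (complex_of_real (pi / 2 * (\<Sum>i\<in>UNIV. real_of_int (k$i) * t$i)) * \<i>)"

text \<open>The 3-dimensional
  Lebesgue (Hausdorff) measure dt on R^4_H is 2 times the push-forward of Lebesgue
  measure on R^3 under this map (Jacobian factor sqrt 4 = 2); with it vol(Omega_H) = 2.\<close>
definition hparam :: "real \<times> real \<times> real \<Rightarrow> real^4" where
  "hparam x = (case x of (a,b,c) \<Rightarrow> vector [a, b, c, -(a+b+c)])"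

definition H_inner :: "(real^4 \<Rightarrow> complex) \<Rightarrow> (real^4 \<Rightarrow> complex) \<Rightarrow> complex" where
  "H_inner f g = (1/2) * integral {x. hparam x \<in> OmegaH}
      (\<lambda>x. 2 * (f (hparam x) * cnj (g (hparam x))))"

definition HnStar :: "nat \<Rightarrow> (int^4) set" where
  "HnStar n = {k \<in> Hlat. \<forall>(i,j)\<in>set idx_pairs.
                 - 4 * int n \<le> k$i - k$j \<and> k$i - k$j \<le> 4 * int n}"

definition Sn :: "nat \<Rightarrow> (real^4 \<Rightarrow> complex) \<Rightarrow> real^4 \<Rightarrow> complex" where
  "Sn n f t = (\<Sum>k\<in>HnStar n. H_inner f (phi k) * phi k t)"

end

theory Submission
  imports Defs
begin


definition ker :: "int set \<Rightarrow> real \<Rightarrow> complex" where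
  "ker S x = (\<Sum>c\<in>S. exp (complex_of_real (2*pi*(of_int c * x)) * \<i>))"

lemma ker_cont: "continuous_on A (ker S)"
  unfolding ker_def by (intro continuous_intros)

lemma norm_ker_neg: "cmod (ker S (-x)) = cmod (ker S x)"
proof -
  have "ker S (-x) = cnj (ker S x)"
    unfolding ker_def by (simp add: cnj_sum exp_cnj)
  then show ?thesis by simp
qed

lemma ker_per: "ker S (x + of_int m) = ker S x"
  unfolding ker_def
proof (intro sum.cong refl)
  fix c assume "c \<in> S"
  have "exp (complex_of_real (2*pi*(of_int c * (x + of_int m))) * \<i>)
      = exp (complex_of_real (2*pi*(of_int c * x)) * \<i>) * exp ((2 * of_int (c*m) * pi) * \<i>)"
    by (simp add: exp_add[symmetric] algebra_simps)
  also have "exp ((2 * of_int (c*m) * pi) * \<i>) = 1"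
    by (rule exp_integer_2pi) simp
  finally show "exp (complex_of_real (2*pi*(of_int c * (x + of_int m))) * \<i>)
      = exp (complex_of_real (2*pi*(of_int c * x)) * \<i>)" by simp
qed

lemma norm_expi: "cmod (exp (complex_of_real a * \<i>)) = 1"
  by (metis mult.commute norm_exp_i_times)

lemma ker_le_card: "finite S \<Longrightarrow> cmod (ker S x) \<le> card S"
  unfolding ker_def
  using norm_sum[of "\<lambda>c. exp (complex_of_real (2*pi*(of_int c * x)) * \<i>)" S]
  by (simp add: norm_expi)

lemma sin_lb: assumes "0 \<le> y" "y \<le> pi/2" shows "y/3 \<le> sin y"
proof -
  have "\<bar>sin y - (\<Sum>m<3. sin_coeff m * y ^ m)\<bar> \<le> inverse (fact 3) * \<bar>y\<bar> ^ 3"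
    by (rule Maclaurin_sin_bound)
  moreover have "(\<Sum>m<3. sin_coeff m * y ^ m) = y"
    by (simp add: eval_nat_numeral sin_coeff_def lessThan_Suc)
  ultimately have "\<bar>sin y - y\<bar> \<le> y^3/6" using assms by (simp add: eval_nat_numeral)
  then have "-(sin y - y) \<le> y^3/6" by (rule abs_le_D2)
  then have "y - y^3/6 \<le> sin y" by linarith
  moreover have "y^3/6 \<le> 2*y/3"
  proof -
    have "y \<le> 2" using assms pi_less_4 by simp
    then have "y*y \<le> 4" using assms by (metis mult_mono' mult_2_right numeral_Bit0 order_refl)
    then have "y*y*y \<le> 4*y" using assms by (simp add: mult_right_mono)
    then show ?thesis by (simp add: eval_nat_numeral)
  qed
  ultimately show ?thesis by simp
qed

lemma sin_pi_lb: assumes "\<bar>x\<bar> \<le> 1/2" shows "x^2 \<le> (sin (pi*x))^2"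
proof -
  have "pi * \<bar>x\<bar> / 3 \<le> sin (pi * \<bar>x\<bar>)" using assms by (intro sin_lb) auto
  moreover have "3 * \<bar>x\<bar> \<le> pi * \<bar>x\<bar>" using pi_gt3 by (intro mult_right_mono) auto
  then have "\<bar>x\<bar> \<le> pi * \<bar>x\<bar> / 3" by simp
  moreover have "\<bar>sin (pi*x)\<bar> = \<bar>sin (pi*\<bar>x\<bar>)\<bar>"
    by (cases "x \<ge> 0") (simp_all add: abs_of_neg)
  ultimately have "\<bar>x\<bar> \<le> \<bar>sin (pi * x)\<bar>" by linarith
  then show ?thesis by (metis abs_ge_zero power2_abs power_mono)
qed

lemma one_minus_exp_lb:
  assumes "\<bar>x\<bar> \<le> 1/2"
  shows "2*\<bar>x\<bar> \<le> cmod (1 - exp (complex_of_real (2*pi*x) * \<i>))"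
proof -
  let ?z = "exp (complex_of_real (2*pi*x) * \<i>)"
  have "(cmod (1 - ?z))^2 = (1 - cos (2*pi*x))^2 + (sin (2*pi*x))^2"
    by (simp add: cmod_power2 Re_exp Im_exp)
  also have "\<dots> = 2 - 2 * cos (2*(pi*x))" by (simp add: power2_diff algebra_simps)
  also have "\<dots> = 4 * (sin (pi*x))^2"
    by (simp add: cos_double sin_squared_eq)
  finally have e: "(cmod (1 - ?z))^2 = 4 * (sin (pi*x))^2" .
  have "(2*\<bar>x\<bar>)^2 \<le> (cmod (1 - ?z))^2"
    unfolding e using sin_pi_lb[OF assms] by (simp add: power_mult_distrib)
  then show ?thesis by (rule power2_le_imp_le) simp
qed

lemma ker_interval:
  "ker {lo..hi} x = exp (complex_of_real (2*pi*(of_int lo * x)) * \<i>) *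
      (\<Sum>m<nat (hi - lo + 1). exp (complex_of_real (2*pi*x) * \<i>) ^ m)"
proof -
  have im: "{lo..hi} = (\<lambda>m. lo + int m) ` {..<nat (hi - lo + 1)}"
  proof (rule set_eqI, rule iffI)
    fix c assume "c \<in> {lo..hi}"
    then show "c \<in> (\<lambda>m. lo + int m) ` {..<nat (hi - lo + 1)}"
      by (intro image_eqI[of _ _ "nat (c - lo)"]) auto
  qed auto
  have inj: "inj_on (\<lambda>m. lo + int m) {..<nat (hi - lo + 1)}" by (auto simp: inj_on_def)
  have "ker {lo..hi} x = (\<Sum>m<nat (hi - lo + 1). exp (complex_of_real (2*pi*(of_int (lo + int m) * x)) * \<i>))"
    unfolding ker_def im by (simp add: sum.reindex[OF inj])
  also have "\<dots> = (\<Sum>m<nat (hi - lo + 1). exp (complex_of_real (2*pi*(of_int lo * x)) * \<i>) *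
        exp (complex_of_real (2*pi*x) * \<i>) ^ m)"
  proof (intro sum.cong refl)
    fix m
    have "exp (complex_of_real (2*pi*(of_int (lo + int m) * x)) * \<i>)
        = exp (complex_of_real (2*pi*(of_int lo * x)) * \<i> + of_nat m * (complex_of_real (2*pi*x) * \<i>))"
      by (simp add: algebra_simps)
    also have "\<dots> = exp (complex_of_real (2*pi*(of_int lo * x)) * \<i>) * exp (complex_of_real (2*pi*x) * \<i>) ^ m"
      by (simp add: exp_add exp_of_nat_mult)
    finally show "exp (complex_of_real (2*pi*(of_int (lo + int m) * x)) * \<i>) = exp (complex_of_real (2*pi*(of_int lo * x)) * \<i>) *
        exp (complex_of_real (2*pi*x) * \<i>) ^ m" .
  qed
  finally show ?thesis by (simp add: sum_distrib_left)
qed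

lemma ker_geom:
  assumes "0 < \<bar>x\<bar>" "\<bar>x\<bar> \<le> 1/2"
  shows "cmod (ker {lo..hi} x) \<le> 1/\<bar>x\<bar>"
proof -
  let ?z = "exp (complex_of_real (2*pi*x) * \<i>)"
  let ?N = "nat (hi - lo + 1)"
  have lb: "2*\<bar>x\<bar> \<le> cmod (1 - ?z)" by (rule one_minus_exp_lb[OF assms(2)])
  then have nz: "cmod (1 - ?z) > 0" using assms by linarith
  then have z1: "?z \<noteq> 1" by auto
  have "cmod (ker {lo..hi} x) = cmod (\<Sum>m<?N. ?z ^ m)"
    unfolding ker_interval by (simp add: norm_mult norm_expi)
  also have "\<dots> = cmod (1 - ?z ^ ?N) / cmod (1 - ?z)"
    using z1 by (simp add: sum_gp_strict norm_divide)
  also have "\<dots> \<le> 2 / cmod (1 - ?z)"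
  proof (rule divide_right_mono)
    have "cmod (1 - ?z ^ ?N) \<le> cmod (1::complex) + cmod (?z ^ ?N)" by (rule norm_triangle_ineq4)
    also have "\<dots> = 2" by (simp add: norm_power norm_expi)
    finally show "cmod (1 - ?z ^ ?N) \<le> 2" .
  qed simp
  also have "\<dots> \<le> 2 / (2*\<bar>x\<bar>)"
    using lb assms nz by (intro divide_left_mono) (auto intro: mult_pos_pos)
  finally show ?thesis by simp
qed

definition B :: "nat \<Rightarrow> real \<Rightarrow> real" where
  "B n x = 2 * (real n + 1) / sqrt (1 + (real n * x)^2)"

lemma B_nonneg: "0 \<le> B n x" by (simp add: B_def)

lemma ker_B:
  assumes "1 \<le> n" "lo \<in> {0,1}" "\<bar>x\<bar> \<le> 1/2"
  shows "cmod (ker {lo..int n} x) \<le> B n x"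
proof -
  have card: "cmod (ker {lo..int n} x) \<le> real n + 1"
  proof -
    have "cmod (ker {lo..int n} x) \<le> card {lo..int n}" by (rule ker_le_card) simp
    also have "card {lo..int n} \<le> n + 1" using assms(2) by auto
    finally show ?thesis by simp
  qed
  have sq: "(real n * x)^2 = (real n * \<bar>x\<bar>)^2" by (simp add: power_mult_distrib)
  show ?thesis
  proof (cases "real n * \<bar>x\<bar> \<le> 1")
    case True
    have "(real n * \<bar>x\<bar>)^2 \<le> 1"
      using True by (intro power_le_one) auto
    then have "1 + (real n * x)^2 \<le> 2^2" using sq by simp
    then have "sqrt (1 + (real n * x)^2) \<le> sqrt (2^2)" by (rule real_sqrt_le_mono)
    then have "sqrt (1 + (real n * x)^2) \<le> 2" by simp
    then have "(real n + 1) * sqrt (1 + (real n * x)^2) \<le> (real n + 1) * 2"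
      by (intro mult_left_mono) auto
    then have m: "(real n + 1) * sqrt (1 + (real n * x)^2) \<le> 2 * (real n + 1)"
      by linarith
    have pos: "0 < sqrt (1 + (real n * x)^2)" by (simp add: add_pos_nonneg)
    have "real n + 1 \<le> B n x" unfolding B_def
      using pos_le_divide_eq[OF pos] m by blast
    then show ?thesis using card by linarith
  next
    case False
    then have xpos: "0 < \<bar>x\<bar>" by auto
    have g: "cmod (ker {lo..int n} x) \<le> 1/\<bar>x\<bar>" by (rule ker_geom[OF xpos assms(3)])
    have "1 \<le> (real n * \<bar>x\<bar>)^2" using False by (intro one_le_power) auto
    then have "1 + (real n * x)^2 \<le> 4 * (real n * \<bar>x\<bar>)^2"
      using sq by linarith
    also have "\<dots> = (2 * real n * \<bar>x\<bar>)^2" by (simp add: power_mult_distrib)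
    finally have "1 + (real n * x)^2 \<le> (2 * real n * \<bar>x\<bar>)^2" .
    then have "sqrt (1 + (real n * x)^2) \<le> sqrt ((2 * real n * \<bar>x\<bar>)^2)" by (rule real_sqrt_le_mono)
    then have s: "sqrt (1 + (real n * x)^2) \<le> 2 * real n * \<bar>x\<bar>" by simp
    have pos: "0 < sqrt (1 + (real n * x)^2)" by (simp add: add_pos_nonneg)
    have "1/\<bar>x\<bar> \<le> (real n + 1) / (real n * \<bar>x\<bar>)"
      using xpos assms(1) by (simp add: field_simps)
    also have "\<dots> = 2 * (real n + 1) / (2 * real n * \<bar>x\<bar>)"
      by (simp only: mult.assoc mult_divide_mult_cancel_left_if) simp
    also have "\<dots> \<le> B n x" unfolding B_def
      using s pos xpos assms(1) by (intro divide_left_mono) (auto intro!: mult_pos_pos)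
    finally show ?thesis using g by linarith
  qed
qed

lemma ker_Bsum:
  assumes "1 \<le> n" "lo \<in> {0,1}" "\<bar>x\<bar> \<le> 4"
  shows "cmod (ker {lo..int n} x) \<le> (\<Sum>r\<in>{-4..4::int}. B n (x - of_int r))"
proof -
  define r0 where "r0 = round x"
  have a: "\<bar>x - of_int r0\<bar> \<le> 1/2" unfolding r0_def using of_int_round_abs_le[of x] by linarith
  have r0m: "r0 \<in> {-4..4}"
  proof -
    have "of_int r0 \<le> x + 1/2" "x - 1/2 \<le> of_int r0" unfolding r0_def
      using of_int_round_le of_int_round_ge by auto
    then have "of_int r0 < (5::real)" "(-5::real) < of_int r0" using assms(3) by linarith+
    then show ?thesis by simp
  qed
  have "ker {lo..int n} x = ker {lo..int n} ((x - of_int r0) + of_int r0)" by simp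
  also have "\<dots> = ker {lo..int n} (x - of_int r0)" by (rule ker_per)
  finally have "cmod (ker {lo..int n} x) \<le> B n (x - of_int r0)"
    using ker_B[OF assms(1,2) a] by simp
  also have "\<dots> \<le> (\<Sum>r\<in>{-4..4::int}. B n (x - of_int r))"
    by (rule member_le_sum[OF r0m]) (auto simp: B_nonneg)
  finally show ?thesis .
qed


lemma B_has_integral:
  assumes n: "1 \<le> n"
  shows "((\<lambda>u. B n (s + u - r)) has_integral
     (2*(real n+1)/real n) * (arsinh (real n*(s+1-r)) - arsinh (real n*(s-1-r)))) {-1..1}"
proof -
  define F where "F u = (2*(real n+1)/real n) * arsinh (real n*(s+u-r))" for u
  have d: "(F has_vector_derivative B n (s + u - r)) (at u within {-1..1})" for u
  proof -
    have d1: "((\<lambda>u. arsinh (real n*(s+u-r))) has_real_derivative (1/sqrt((real n*(s+u-r))^2+1)) * real n) (at u within {-1..1})"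
      by (rule DERIV_chain2[OF arsinh_real_has_field_derivative]) (auto intro!: derivative_eq_intros)
    have "(F has_real_derivative (2*(real n+1)/real n) * ((1 / sqrt ((real n*(s+u-r))^2 + 1)) * real n)) (at u within {-1..1})"
      unfolding F_def by (rule DERIV_cmult[OF d1])
    moreover have "(2*(real n+1)/real n) * ((1 / sqrt ((real n*(s+u-r))^2 + 1)) * real n) = B n (s + u - r)"
      using n by (simp add: B_def add.commute)
    ultimately show ?thesis by (simp add: has_real_derivative_iff_has_vector_derivative)
  qed
  have "((\<lambda>u. B n (s + u - r)) has_integral (F 1 - F (-1))) {-1..1}"
    by (rule fundamental_theorem_of_calculus) (auto intro: d)
  then show ?thesis by (simp add: F_def right_diff_distrib)
qed

lemma arsinh_mono: "a \<le> b \<Longrightarrow> arsinh a \<le> arsinh (b::real)"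
  by (metis arsinh_less_iff_real not_less)

lemma arsinh_le_ln: assumes "2 \<le> n" shows "arsinh (8 * real n) \<le> 6 * ln (real n)"
proof -
  have "sqrt ((8 * real n)^2 + 1) \<le> sqrt ((8 * real n + 1)^2)"
    by (rule real_sqrt_le_mono) (simp add: power2_sum)
  then have s: "sqrt ((8 * real n)^2 + 1) \<le> 8 * real n + 1" by simp
  have "arsinh (8 * real n) = ln (8 * real n + sqrt ((8 * real n)^2 + 1))" by (rule arsinh_real_def)
  also have "\<dots> \<le> ln (16 * real n + 1)"
    using s arsinh_real_aux[of "8 * real n"] by (subst ln_le_cancel_iff) auto
  also have "\<dots> \<le> ln (real n ^ 6)"
  proof (subst ln_le_cancel_iff)
    have "(32::real) \<le> real n ^ 5"
    proof -
      have "(2::real)^5 \<le> real n ^ 5" using assms by (intro power_mono) auto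
      then show ?thesis by simp
    qed
    then have "32 * real n \<le> real n ^ 5 * real n" using assms by (intro mult_right_mono) auto
    moreover have "real n ^ 6 = real n ^ 5 * real n" by (simp add: eval_nat_numeral mult_ac)
    moreover have "real n \<ge> 2" using assms by simp
    ultimately show "16 * real n + 1 \<le> real n ^ 6" by linarith
  qed (use assms in auto)
  also have "\<dots> = 6 * ln (real n)" using assms by (simp add: ln_realpow)
  finally show ?thesis .
qed

lemma ker_int_bound:
  assumes n: "2 \<le> n" and lo: "lo \<in> {0,1}" and s: "\<bar>s\<bar> \<le> 3"
  shows "(\<lambda>u. cmod (ker {lo..int n} (s+u))) integrable_on {-1..1}"
    and "integral {-1..1} (\<lambda>u. cmod (ker {lo..int n} (s+u))) \<le> 324 * ln (real n)"
proof -
  have n1: "1 \<le> n" using n by simp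
  have cont: "continuous_on {-1..1} (\<lambda>u. cmod (ker {lo..int n} (s+u)))"
    by (intro continuous_intros continuous_on_compose2[OF ker_cont[of UNIV]]) auto
  show int: "(\<lambda>u. cmod (ker {lo..int n} (s+u))) integrable_on {-1..1}"
    by (rule integrable_continuous_interval[OF cont])
  define I where "I r = (2*(real n+1)/real n) * (arsinh (real n*(s+1-of_int r)) - arsinh (real n*(s-1-of_int r)))" for r :: int
  have hs: "((\<lambda>u. \<Sum>r\<in>{-4..4::int}. B n (s + u - of_int r)) has_integral (\<Sum>r\<in>{-4..4::int}. I r)) {-1..1}"
    unfolding I_def by (intro has_integral_sum B_has_integral n1) auto
  have "integral {-1..1} (\<lambda>u. cmod (ker {lo..int n} (s+u))) \<le> (\<Sum>r\<in>{-4..4::int}. I r)"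
  proof (rule has_integral_le[OF integrable_integral[OF int] hs])
    fix u :: real assume "u \<in> {-1..1}"
    then have "\<bar>s + u\<bar> \<le> 4" using s by auto
    from ker_Bsum[OF n1 lo this] show "cmod (ker {lo..int n} (s+u)) \<le> (\<Sum>r\<in>{-4..4::int}. B n (s + u - of_int r))"
      by (simp add: algebra_simps)
  qed
  also have "\<dots> \<le> (\<Sum>r\<in>{-4..4::int}. 6 * arsinh (8 * real n))"
  proof (rule sum_mono)
    fix r :: int assume r: "r \<in> {-4..4}"
    have a1: "arsinh (real n*(s+1-of_int r)) \<le> arsinh (8 * real n)"
      using r s n by (intro arsinh_mono) (auto intro!: mult_left_mono[of _ 8, simplified mult.commute])
    have a2: "arsinh (-(8 * real n)) \<le> arsinh (real n*(s-1-of_int r))"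
    proof (rule arsinh_mono)
      have "-8 \<le> s - 1 - of_int r" using r s by auto
      then have "real n * (-8) \<le> real n * (s - 1 - of_int r)" by (intro mult_left_mono) auto
      then show "-(8 * real n) \<le> real n*(s-1-of_int r)" by simp
    qed
    have pos: "0 \<le> arsinh (8 * real n)" using arsinh_mono[of 0 "8 * real n"] by simp
    have "arsinh (real n*(s+1-of_int r)) - arsinh (real n*(s-1-of_int r)) \<le> 2 * arsinh (8 * real n)"
      using a1 a2 by simp
    moreover have "2*(real n+1)/real n \<le> 3" using n by (simp add: field_simps)
    moreover have "0 \<le> arsinh (real n*(s+1-of_int r)) - arsinh (real n*(s-1-of_int r))"
      using arsinh_mono[of "real n*(s-1-of_int r)" "real n*(s+1-of_int r)"] by (simp add: algebra_simps)
    ultimately have "I r \<le> 3 * (2 * arsinh (8 * real n))"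
      unfolding I_def by (intro mult_mono) auto
    then show "I r \<le> 6 * arsinh (8 * real n)" by simp
  qed
  also have "\<dots> = 54 * arsinh (8 * real n)" by simp
  also have "\<dots> \<le> 54 * (6 * ln (real n))" using arsinh_le_ln[OF n] by simp
  finally show "integral {-1..1} (\<lambda>u. cmod (ker {lo..int n} (s+u))) \<le> 324 * ln (real n)" by simp
qed


lemma prod_int_le:
  fixes F :: "('a::euclidean_space \<times> 'b::euclidean_space) \<Rightarrow> real"
  assumes "continuous_on (cbox (a,c) (b,d)) F" "\<phi> integrable_on cbox a b"
    "\<And>x. x \<in> cbox a b \<Longrightarrow> integral (cbox c d) (\<lambda>y. F(x,y)) \<le> \<phi> x"
  shows "integral (cbox (a,c) (b,d)) F \<le> integral (cbox a b) \<phi>"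
proof -
  have "integral (cbox (a,c) (b,d)) F = integral (cbox a b) (\<lambda>x. integral (cbox c d) (\<lambda>y. F (x, y)))"
    by (rule integral_prod_continuous[OF assms(1)])
  also have "\<dots> \<le> integral (cbox a b) \<phi>"
    by (rule integral_le[OF integral_integrable_2dim[OF assms(1)] assms(2) assms(3)])
  finally show ?thesis .
qed

definition good :: "(real \<Rightarrow> real) \<Rightarrow> real \<Rightarrow> bool" where
  "good h A \<longleftrightarrow> continuous_on UNIV h \<and> (\<forall>x. 0 \<le> h x) \<and> (\<forall>x. h (-x) = h x)
     \<and> (\<forall>s. \<bar>s\<bar> \<le> 3 \<longrightarrow> integral {-1..1} (\<lambda>u. h(s+u)) \<le> A)"

lemma cbox_real: "cbox (a::real) b = {a..b}" by (rule cbox_interval)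

lemma int_const_mult_le:
  fixes P :: "real \<Rightarrow> real"
  assumes "continuous_on {-1..1} P" "integral {-1..1} P \<le> A" "0 \<le> K"
  shows "integral {-1..1} (\<lambda>x. K * P x) \<le> K * A"
proof -
  have "integral {-1..1} (\<lambda>x. K * P x) = K * integral {-1..1} P"
    using integral_mult[OF integrable_continuous_interval[OF assms(1)], of K] by simp
  also have "\<dots> \<le> K * A" using assms by (intro mult_left_mono) auto
  finally show ?thesis .
qed

lemma int_nonneg_cont:
  fixes P :: "real \<Rightarrow> real"
  assumes "continuous_on {-1..1} P" "\<And>x. 0 \<le> P x"
  shows "0 \<le> integral {-1..1} P"
  by (rule integral_nonneg[OF integrable_continuous_interval[OF assms(1)]]) (use assms in auto)

abbreviation "sq \<equiv> cbox (-1::real,-1::real) (1,1)"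
abbreviation "cube \<equiv> cbox (-1::real,-1::real,-1::real) (1,1,1)"

lemma cube_c:
  fixes P Q :: "real \<Rightarrow> real" and R :: "real \<times> real \<times> real \<Rightarrow> real"
  assumes cP: "continuous_on UNIV P" and cQ: "continuous_on UNIV Q" and cR: "continuous_on UNIV R"
    and nP: "\<And>x. 0 \<le> P x" and nQ: "\<And>x. 0 \<le> Q x" and nR: "\<And>x. 0 \<le> R x"
    and iP: "integral {-1..1} P \<le> A" and iQ: "integral {-1..1} Q \<le> A"
    and iR: "\<And>a b. a \<in> {-1..1} \<Longrightarrow> b \<in> {-1..1} \<Longrightarrow> integral {-1..1} (\<lambda>c. R (a,b,c)) \<le> A"
  shows "integral cube (\<lambda>(a,b,c). P a * Q b * R (a,b,c)) \<le> A^3"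
proof -
  have A0: "0 \<le> A" using iP int_nonneg_cont[of P] cP nP continuous_on_subset by fastforce
  have "integral (cbox (-1, (-1,-1)) (1, (1,1))) (\<lambda>(a,b,c). P a * Q b * R (a,b,c))
      \<le> integral (cbox (-1) 1) (\<lambda>a. A^2 * P a)"
  proof (rule prod_int_le)
    show "continuous_on (cbox (-1, -1, -1) (1, 1, 1)) (\<lambda>(a,b,c). P a * Q b * R (a,b,c))"
      unfolding split_def
      by (intro continuous_intros continuous_on_compose2[OF cP] continuous_on_compose2[OF cQ]
          continuous_on_compose2[OF cR]) auto
    show "(\<lambda>a. A^2 * P a) integrable_on cbox (-1) 1"
      by (intro integrable_continuous continuous_intros continuous_on_subset[OF cP]) auto
    fix a :: real assume a: "a \<in> cbox (-1) 1"
    have "integral (cbox (-1,-1) (1,1)) (\<lambda>y. case (a, y) of (a, b, c) \<Rightarrow> P a * Q b * R (a, b, c))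
         = integral (cbox (-1,-1) (1,1)) (\<lambda>(b,c). P a * Q b * R (a,b,c))"
      by (simp add: split_def)
    also have "\<dots> \<le> integral (cbox (-1) 1) (\<lambda>b. (P a * A) * Q b)"
    proof (rule prod_int_le)
      show "continuous_on (cbox (-1, -1) (1, 1)) (\<lambda>(b,c). P a * Q b * R (a,b,c))"
        unfolding split_def
        by (intro continuous_intros continuous_on_compose2[OF cQ]
            continuous_on_compose2[OF cR]) auto
      show "(\<lambda>b. (P a * A) * Q b) integrable_on cbox (-1) 1"
        by (intro integrable_continuous continuous_intros continuous_on_subset[OF cQ]) auto
      fix b :: real assume b: "b \<in> cbox (-1) 1"
      have "integral (cbox (-1) 1) (\<lambda>c. case (b, c) of (b, c) \<Rightarrow> P a * Q b * R (a, b, c))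
          = integral {-1..1} (\<lambda>c. (P a * Q b) * R (a,b,c))" by (simp add: cbox_real)
      also have "\<dots> \<le> (P a * Q b) * A"
        using a b nP nQ nR iR[of a b]
        by (intro int_const_mult_le continuous_on_compose2[OF cR]) (auto intro!: continuous_intros simp: cbox_real)
      finally show "integral (cbox (-1) 1) (\<lambda>c. case (b, c) of (b, c) \<Rightarrow> P a * Q b * R (a, b, c)) \<le> (P a * A) * Q b"
        by (simp add: mult_ac)
    qed
    also have "\<dots> \<le> (P a * A) * A"
      unfolding cbox_real using nP A0 cQ iQ by (intro int_const_mult_le) (auto intro: continuous_on_subset)
    finally show "integral (cbox (-1,-1) (1,1)) (\<lambda>y. case (a, y) of (a, b, c) \<Rightarrow> P a * Q b * R (a, b, c)) \<le> A^2 * P a"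
      by (simp add: power2_eq_square mult_ac)
  qed
  also have "\<dots> \<le> A^2 * A"
    unfolding cbox_real using A0 cP iP by (intro int_const_mult_le) (auto intro: continuous_on_subset)
  finally show ?thesis by (simp add: power3_eq_cube power2_eq_square)
qed

lemma sq_bound:
  fixes P Q :: "real \<Rightarrow> real"
  assumes cP: "continuous_on UNIV P" and cQ: "continuous_on UNIV Q"
    and nP: "\<And>x. 0 \<le> P x" and nQ: "\<And>x. 0 \<le> Q x"
    and iP: "integral {-1..1} P \<le> A" and iQ: "integral {-1..1} Q \<le> A" and K: "0 \<le> K"
  shows "integral sq (\<lambda>(b,c). K * (P b * Q c)) \<le> K * A^2"
proof -
  have A0: "0 \<le> A" using iP int_nonneg_cont[of P] cP nP continuous_on_subset by fastforce
  have "integral sq (\<lambda>(b,c). K * (P b * Q c)) \<le> integral (cbox (-1) 1) (\<lambda>b. (K * A) * P b)"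
  proof (rule prod_int_le)
    show "continuous_on sq (\<lambda>(b,c). K * (P b * Q c))"
      unfolding split_def
      by (intro continuous_intros continuous_on_compose2[OF cP] continuous_on_compose2[OF cQ]) auto
    show "(\<lambda>b. (K * A) * P b) integrable_on cbox (-1) 1"
      by (intro integrable_continuous continuous_intros continuous_on_subset[OF cP]) auto
    fix b :: real assume b: "b \<in> cbox (-1) 1"
    have "integral (cbox (-1) 1) (\<lambda>c. case (b, c) of (b, c) \<Rightarrow> K * (P b * Q c))
        = integral {-1..1} (\<lambda>c. (K * P b) * Q c)" by (simp add: cbox_real mult_ac)
    also have "\<dots> \<le> (K * P b) * A"
      using nP K cQ iQ by (intro int_const_mult_le) (auto intro: continuous_on_subset)
    finally show "integral (cbox (-1) 1) (\<lambda>c. case (b, c) of (b, c) \<Rightarrow> K * (P b * Q c)) \<le> (K * A) * P b"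
      by (simp add: mult_ac)
  qed
  also have "\<dots> \<le> (K * A) * A"
    unfolding cbox_real using A0 K cP iP by (intro int_const_mult_le) (auto intro: continuous_on_subset)
  finally show ?thesis by (simp add: power2_eq_square mult_ac)
qed

lemma cube_b:
  fixes P Q :: "real \<Rightarrow> real" and R :: "real \<times> real \<times> real \<Rightarrow> real"
  assumes cP: "continuous_on UNIV P" and cQ: "continuous_on UNIV Q" and cR: "continuous_on UNIV R"
    and nP: "\<And>x. 0 \<le> P x" and nQ: "\<And>x. 0 \<le> Q x" and nR: "\<And>x. 0 \<le> R x"
    and iP: "integral {-1..1} P \<le> A" and iQ: "integral {-1..1} Q \<le> A"
    and iR: "\<And>a c. a \<in> {-1..1} \<Longrightarrow> c \<in> {-1..1} \<Longrightarrow> integral {-1..1} (\<lambda>b. R (a,b,c)) \<le> A"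
  shows "integral cube (\<lambda>(a,b,c). P a * Q c * R (a,b,c)) \<le> A^3"
proof -
  have A0: "0 \<le> A" using iP int_nonneg_cont[of P] cP nP continuous_on_subset by fastforce
  have "integral (cbox (-1, (-1,-1)) (1, (1,1))) (\<lambda>(a,b,c). P a * Q c * R (a,b,c))
      \<le> integral (cbox (-1) 1) (\<lambda>a. A^2 * P a)"
  proof (rule prod_int_le)
    show "continuous_on (cbox (-1, -1, -1) (1, 1, 1)) (\<lambda>(a,b,c). P a * Q c * R (a,b,c))"
      unfolding split_def
      by (intro continuous_intros continuous_on_compose2[OF cP] continuous_on_compose2[OF cQ]
          continuous_on_compose2[OF cR]) auto
    show "(\<lambda>a. A^2 * P a) integrable_on cbox (-1) 1"
      by (intro integrable_continuous continuous_intros continuous_on_subset[OF cP]) auto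
    fix a :: real assume a: "a \<in> cbox (-1) 1"
    have "integral (cbox (-1,-1) (1,1)) (\<lambda>y. case (a, y) of (a, b, c) \<Rightarrow> P a * Q c * R (a, b, c))
         = integral (cbox (-1,-1) (1,1)) (\<lambda>(b,c). (\<lambda>b c. P a * Q c * R (a,b,c)) b c)"
      by (simp add: split_def)
    also have "\<dots> = integral (cbox (-1,-1) (1,1)) (\<lambda>(c,b). (\<lambda>b c. P a * Q c * R (a,b,c)) b c)"
    proof (rule integral_swap_2dim)
      show "continuous_on (cbox (-1, -1) (1, 1)) (\<lambda>(b,c). (\<lambda>b c. P a * Q c * R (a,b,c)) b c)"
        unfolding split_def
        by (intro continuous_intros continuous_on_compose2[OF cQ]
            continuous_on_compose2[OF cR]) auto
    qed
    also have "\<dots> \<le> integral (cbox (-1) 1) (\<lambda>c. (P a * A) * Q c)"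
    proof (rule prod_int_le)
      show "continuous_on (cbox (-1, -1) (1, 1)) (\<lambda>(c,b). (\<lambda>b c. P a * Q c * R (a,b,c)) b c)"
        unfolding split_def
        by (intro continuous_intros continuous_on_compose2[OF cQ]
            continuous_on_compose2[OF cR]) auto
      show "(\<lambda>c. (P a * A) * Q c) integrable_on cbox (-1) 1"
        by (intro integrable_continuous continuous_intros continuous_on_subset[OF cQ]) auto
      fix c :: real assume c: "c \<in> cbox (-1) 1"
      have "integral (cbox (-1) 1) (\<lambda>b. case (c, b) of (c, b) \<Rightarrow> (\<lambda>b c. P a * Q c * R (a,b,c)) b c)
          = integral {-1..1} (\<lambda>b. (P a * Q c) * R (a,b,c))" by (simp add: cbox_real)
      also have "\<dots> \<le> (P a * Q c) * A"
        using a c nP nQ nR iR[of a c]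
        by (intro int_const_mult_le continuous_on_compose2[OF cR]) (auto intro!: continuous_intros simp: cbox_real)
      finally show "integral (cbox (-1) 1) (\<lambda>b. case (c, b) of (c, b) \<Rightarrow> (\<lambda>b c. P a * Q c * R (a,b,c)) b c) \<le> (P a * A) * Q c"
        by (simp add: mult_ac)
    qed
    also have "\<dots> \<le> (P a * A) * A"
      unfolding cbox_real using nP A0 cQ iQ by (intro int_const_mult_le) (auto intro: continuous_on_subset)
    finally show "integral (cbox (-1,-1) (1,1)) (\<lambda>y. case (a, y) of (a, b, c) \<Rightarrow> P a * Q c * R (a, b, c)) \<le> A^2 * P a"
      by (simp add: power2_eq_square mult_ac)
  qed
  also have "\<dots> \<le> A^2 * A"
    unfolding cbox_real using A0 cP iP by (intro int_const_mult_le) (auto intro: continuous_on_subset)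
  finally show ?thesis by (simp add: power3_eq_cube power2_eq_square)
qed

lemma cube_a:
  fixes P Q :: "real \<Rightarrow> real" and R :: "real \<times> real \<times> real \<Rightarrow> real"
  assumes cP: "continuous_on UNIV P" and cQ: "continuous_on UNIV Q" and cR: "continuous_on UNIV R"
    and nP: "\<And>x. 0 \<le> P x" and nQ: "\<And>x. 0 \<le> Q x" and nR: "\<And>x. 0 \<le> R x"
    and iP: "integral {-1..1} P \<le> A" and iQ: "integral {-1..1} Q \<le> A"
    and iR: "\<And>b c. b \<in> {-1..1} \<Longrightarrow> c \<in> {-1..1} \<Longrightarrow> integral {-1..1} (\<lambda>a. R (a,b,c)) \<le> A"
  shows "integral cube (\<lambda>(a,b,c). P b * Q c * R (a,b,c)) \<le> A^3"
proof -
  have A0: "0 \<le> A" using iP int_nonneg_cont[of P] cP nP continuous_on_subset by fastforce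
  let ?f = "\<lambda>a y. P (fst y) * Q (snd y) * R (a, fst y, snd y)"
  have "integral cube (\<lambda>(a,b,c). P b * Q c * R (a,b,c)) = integral (cbox (-1, (-1,-1)) (1, (1,1))) (\<lambda>(x,y). ?f x y)"
    by (simp add: split_def)
  also have "\<dots> = integral (cbox ((-1,-1), -1) ((1,1), 1)) (\<lambda>(x,y). ?f y x)"
  proof (rule integral_swap_2dim)
    show "continuous_on (cbox (-1, (-1,-1)) (1, (1,1))) (\<lambda>(x,y). ?f x y)"
      unfolding split_def
      by (intro continuous_intros continuous_on_compose2[OF cP] continuous_on_compose2[OF cQ]
          continuous_on_compose2[OF cR]) auto
  qed
  also have "\<dots> \<le> integral sq (\<lambda>(b,c). A * (P b * Q c))"
  proof (rule prod_int_le)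
    show "continuous_on (cbox ((-1,-1), -1) ((1,1), 1)) (\<lambda>(x,y). ?f y x)"
      unfolding split_def
      by (intro continuous_intros continuous_on_compose2[OF cP] continuous_on_compose2[OF cQ]
          continuous_on_compose2[OF cR]) auto
    show "(\<lambda>(b,c). A * (P b * Q c)) integrable_on sq"
      unfolding split_def
      by (intro integrable_continuous continuous_intros continuous_on_compose2[OF cP] continuous_on_compose2[OF cQ]) auto
    fix y :: "real \<times> real" assume y: "y \<in> sq"
    obtain b c where yb: "y = (b,c)" by force
    have bc: "b \<in> {-1..1}" "c \<in> {-1..1}" using y yb by (auto simp: cbox_Pair_iff cbox_real)
    have "integral (cbox (-1) 1) (\<lambda>a. case (y, a) of (x, y) \<Rightarrow> ?f y x)
        = integral {-1..1} (\<lambda>a. (P b * Q c) * R (a,b,c))" by (simp add: cbox_real yb)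
    also have "\<dots> \<le> (P b * Q c) * A"
      using bc nP nQ nR iR[of b c]
      by (intro int_const_mult_le continuous_on_compose2[OF cR]) (auto intro!: continuous_intros simp: cbox_real)
    finally show "integral (cbox (-1) 1) (\<lambda>a. case (y, a) of (x, y) \<Rightarrow> ?f y x) \<le> (case y of (b,c) \<Rightarrow> A * (P b * Q c))"
      by (simp add: yb mult_ac)
  qed
  also have "\<dots> \<le> A * A^2"
    by (rule sq_bound[OF cP cQ nP nQ iP iQ A0])
  finally show ?thesis by (simp add: power3_eq_cube power2_eq_square)
qed


definition Sj :: "nat \<Rightarrow> 4 \<Rightarrow> 4 \<Rightarrow> int set" where
  "Sj n j i = (if i = j then {0} else if i < j then {1..int n} else {0..int n})"

definition Phi :: "(4 \<Rightarrow> int) \<Rightarrow> int^4" where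
  "Phi c = (\<chi> i. 4 * c i - (\<Sum>l\<in>UNIV. c l))"

lemma pairs_abs: "(\<forall>(i,j)\<in>set idx_pairs. - 4 * int n \<le> k$i - k$j \<and> k$i - k$j \<le> 4 * int n)
   \<longleftrightarrow> (\<forall>i j. \<bar>k$i - k$j\<bar> \<le> 4*int n)"
proof
  assume H: "\<forall>(i,j)\<in>set idx_pairs. - 4 * int n \<le> k$i - k$j \<and> k$i - k$j \<le> 4 * int n"
  have h: "\<bar>k$1 - k$2\<bar> \<le> 4*int n" "\<bar>k$1 - k$3\<bar> \<le> 4*int n" "\<bar>k$1 - k$4\<bar> \<le> 4*int n"
     "\<bar>k$2 - k$3\<bar> \<le> 4*int n" "\<bar>k$2 - k$4\<bar> \<le> 4*int n" "\<bar>k$3 - k$4\<bar> \<le> 4*int n"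
    using H unfolding idx_pairs_def by (simp_all add: abs_le_iff)
  show "\<forall>i j. \<bar>k$i - k$j\<bar> \<le> 4*int n"
  proof (intro allI)
    fix i j :: 4
    show "\<bar>k$i - k$j\<bar> \<le> 4*int n"
      using exhaust_4[of i] exhaust_4[of j] h by (elim disjE) (simp_all add: abs_minus_commute)
  qed
next
  assume H: "\<forall>i j. \<bar>k$i - k$j\<bar> \<le> 4*int n"
  have h: "- 4 * int n \<le> k$i - k$j \<and> k$i - k$j \<le> 4 * int n" for i j
    using H[rule_format, of i j] by (simp add: abs_le_iff)
  show "\<forall>(i,j)\<in>set idx_pairs. - 4 * int n \<le> k$i - k$j \<and> k$i - k$j \<le> 4 * int n"
    unfolding idx_pairs_def using h by simp
qed

lemma HnStar_iff: "k \<in> HnStar n \<longleftrightarrow> (\<Sum>i\<in>UNIV. k$i) = 0 \<and> (\<forall>i j. k$i mod 4 = k$j mod 4)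
   \<and> (\<forall>i j. \<bar>k$i - k$j\<bar> \<le> 4*int n)"
  unfolding HnStar_def Hlat_def ZH_def mem_Collect_eq pairs_abs by blast

lemma phi_Phi:
  assumes "y \<in> RH"
  shows "phi (Phi c) y = (\<Prod>i\<in>UNIV. exp (complex_of_real (2*pi*(of_int (c i) * y$i)) * \<i>))"
proof -
  have sy: "(\<Sum>i\<in>UNIV. y$i) = 0" using assms by (simp add: RH_def)
  have "(\<Sum>i\<in>UNIV. real_of_int ((Phi c)$i) * y$i)
      = (\<Sum>i\<in>UNIV. 4 * (real_of_int (c i) * y$i) - real_of_int (\<Sum>l\<in>UNIV. c l) * y$i)"
    by (simp add: Phi_def algebra_simps)
  also have "\<dots> = 4 * (\<Sum>i\<in>UNIV. real_of_int (c i) * y$i) - real_of_int (\<Sum>l\<in>UNIV. c l) * (\<Sum>i\<in>UNIV. y$i)"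
    by (simp add: sum_subtractf sum_distrib_left)
  also have "\<dots> = 4 * (\<Sum>i\<in>UNIV. real_of_int (c i) * y$i)" using sy by simp
  finally have e: "(\<Sum>i\<in>UNIV. real_of_int ((Phi c)$i) * y$i) = 4 * (\<Sum>i\<in>UNIV. real_of_int (c i) * y$i)" .
  have "phi (Phi c) y = exp (\<Sum>i\<in>UNIV. complex_of_real (2*pi*(of_int (c i) * y$i)) * \<i>)"
    unfolding phi_def e by (simp add: sum_distrib_left sum_distrib_right mult_ac)
  also have "\<dots> = (\<Prod>i\<in>UNIV. exp (complex_of_real (2*pi*(of_int (c i) * y$i)) * \<i>))"
    by (simp add: exp_sum)
  finally show ?thesis .
qed

lemma Sj_mem: "c i \<in> Sj n j i \<longleftrightarrow> (if i = j then c i = 0 else if i < j then 1 \<le> c i \<and> c i \<le> int n else 0 \<le> c i \<and> c i \<le> int n)"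
  by (auto simp: Sj_def)

lemma finite_Sj: "finite (Sj n j i)" by (simp add: Sj_def)

lemma bij_Phi: "bij_betw (\<lambda>p. Phi (snd p)) (SIGMA j:UNIV. PiE UNIV (Sj n j)) (HnStar n)"
proof (rule bij_betwI')
  fix p q assume p: "p \<in> (SIGMA j:UNIV. PiE UNIV (Sj n j))" and q: "q \<in> (SIGMA j:UNIV. PiE UNIV (Sj n j))"
  obtain j c where pj: "p = (j,c)" by force
  obtain j' c' where qj: "q = (j',c')" by force
  have c: "\<And>i. c i \<in> Sj n j i" and c': "\<And>i. c' i \<in> Sj n j' i" using p q pj qj by auto
  show "(Phi (snd p) = Phi (snd q)) = (p = q)"
  proof
    assume "Phi (snd p) = Phi (snd q)"
    then have E: "\<And>i. 4 * c i - (\<Sum>l\<in>UNIV. c l) = 4 * c' i - (\<Sum>l\<in>UNIV. c' l)"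
      using pj qj by (metis Phi_def snd_conv vec_lambda_beta)
    define d where "d = (\<Sum>l\<in>UNIV. c l) - (\<Sum>l\<in>UNIV. c' l)"
    have D: "\<And>i. 4 * (c i - c' i) = d" using E unfolding d_def by (smt (verit))
    have "d \<le> 0" using D[of j] c[of j] c'[of j] by (auto simp: Sj_mem split: if_splits)
    moreover have "d \<ge> 0" using D[of j'] c[of j'] c'[of j'] by (auto simp: Sj_mem split: if_splits)
    ultimately have "d = 0" by simp
    then have cc: "c = c'" using D by (intro ext) (smt (verit))
    have "j = j'"
    proof (rule ccontr)
      assume "j \<noteq> j'"
      then consider "j < j'" | "j' < j" using neq_iff by blast
      then show False
      proof cases
        case 1 then have "j \<noteq> j'" "\<not> j' < j" by auto
        then show False using 1 c[of j] c'[of j] cc by (auto simp: Sj_def)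
      next
        case 2 then have "j \<noteq> j'" "\<not> j < j'" by auto
        then show False using 2 c[of j'] c'[of j'] cc by (auto simp: Sj_def)
      qed
    qed
    then show "p = q" using cc pj qj by simp
  qed simp
next
  fix p assume p: "p \<in> (SIGMA j:UNIV. PiE UNIV (Sj n j))"
  obtain j c where pj: "p = (j,c)" by force
  have c: "\<And>i. c i \<in> Sj n j i" using p pj by auto
  have c0: "0 \<le> c i \<and> c i \<le> int n" for i using c[of i] by (auto simp: Sj_def split: if_splits)
  show "Phi (snd p) \<in> HnStar n"
    unfolding HnStar_iff
  proof (intro conjI allI)
    show "(\<Sum>i\<in>UNIV. Phi (snd p) $ i) = 0"
      by (simp add: Phi_def pj sum_subtractf sum_distrib_left)
    fix i l
    show "Phi (snd p) $ i mod 4 = Phi (snd p) $ l mod 4"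
      by (simp add: Phi_def pj mod_diff_eq[symmetric])
    show "\<bar>Phi (snd p) $ i - Phi (snd p) $ l\<bar> \<le> 4 * int n"
      using c0[of i] c0[of l] by (simp add: Phi_def pj abs_le_iff)
  qed
next
  fix k assume k: "k \<in> HnStar n"
  then have ks: "(\<Sum>i\<in>UNIV. k$i) = 0" and km: "\<And>i j. k$i mod 4 = k$j mod 4"
    and kd: "\<And>i j. \<bar>k$i - k$j\<bar> \<le> 4*int n" by (auto simp: HnStar_iff)
  define m where "m = Min (range (\<lambda>i. k$i))"
  have mle: "\<And>i. m \<le> k$i" unfolding m_def by (intro Min_le) auto
  have "m \<in> range (\<lambda>i. k$i)" unfolding m_def by (intro Min_in) auto
  then obtain i0 where i0: "k$i0 = m" by auto
  define j where "j = (LEAST i. k$i = m)"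
  have kj: "k$j = m" unfolding j_def using i0 by (rule LeastI)
  have jl: "\<And>i. i < j \<Longrightarrow> k$i \<noteq> m" unfolding j_def using not_less_Least by blast
  define c where "c = (\<lambda>i. (k$i - m) div 4)"
  have dv: "\<And>i. 4 * c i = k$i - m"
  proof -
    fix i
    have "(k$i - m) mod 4 = 0" using km[of i j] kj by (simp add: mod_diff_eq[symmetric])
    then show "4 * c i = k$i - m" unfolding c_def by (metis div_mult_mod_eq add.right_neutral mult.commute)
  qed
  have sc: "4 * (\<Sum>l\<in>UNIV. c l) = - 4 * m"
  proof -
    have "4 * (\<Sum>l\<in>UNIV. c l) = (\<Sum>l\<in>UNIV. k$l - m)" by (simp add: sum_distrib_left dv)
    also have "\<dots> = - 4 * m" using ks by (simp add: sum_subtractf)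
    finally show ?thesis .
  qed
  have cmem: "c \<in> PiE UNIV (Sj n j)"
  proof -
    have "c i \<in> Sj n j i" for i
    proof -
      have a: "0 \<le> c i" using dv[of i] mle[of i] by simp
      have b: "c i \<le> int n" using dv[of i] kd[of i i0] i0 mle[of i] by (simp add: abs_le_iff)
      show ?thesis
      proof (cases "i = j")
        case True then show ?thesis using dv[of i] kj by (simp add: Sj_def)
      next
        case False
        show ?thesis
        proof (cases "i < j")
          case True
          then have "k$i \<noteq> m" by (rule jl)
          then have "c i \<noteq> 0" using dv[of i] by auto
          then show ?thesis using a b False True by (simp add: Sj_mem)
        next
          case False2: False
          then show ?thesis using a b False by (simp add: Sj_mem)
        qed
      qed
    qed
    then show ?thesis by auto
  qed
  have "Phi c = k"
  proof -
    have "\<And>i. 4 * c i - (\<Sum>l\<in>UNIV. c l) = k$i" using dv sc by (smt (verit))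
    then show ?thesis unfolding Phi_def by (simp add: vec_eq_iff)
  qed
  then show "\<exists>p\<in>(SIGMA j:UNIV. PiE UNIV (Sj n j)). k = Phi (snd p)"
    using cmem by (intro bexI[of _ "(j,c)"]) auto
qed

lemma Dn_decomp:
  assumes "y \<in> RH"
  shows "(\<Sum>k\<in>HnStar n. phi k y) = (\<Sum>j\<in>UNIV. \<Prod>i\<in>UNIV. ker (Sj n j i) (y$i))"
proof -
  have "(\<Sum>j\<in>UNIV. \<Prod>i\<in>UNIV. ker (Sj n j i) (y$i))
     = (\<Sum>j\<in>UNIV. \<Sum>c\<in>PiE UNIV (Sj n j). \<Prod>i\<in>UNIV. exp (complex_of_real (2*pi*(of_int (c i) * y$i)) * \<i>))"
    unfolding ker_def by (intro sum.cong refl prod_sum_PiE) (auto simp: finite_Sj)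
  also have "\<dots> = (\<Sum>j\<in>UNIV. \<Sum>c\<in>PiE UNIV (Sj n j). phi (Phi c) y)"
    using assms by (simp add: phi_Phi)
  also have "\<dots> = (\<Sum>p\<in>(SIGMA j:UNIV. PiE UNIV (Sj n j)). phi (Phi (snd p)) y)"
    by (subst sum.Sigma) (auto simp: finite_Sj finite_PiE split_def)
  also have "\<dots> = (\<Sum>k\<in>HnStar n. phi k y)"
    by (rule sum.reindex_bij_betw[OF bij_Phi])
  finally show ?thesis by simp
qed


lemma hparam_comp:
  "hparam (a,b,c) $ 1 = a" "hparam (a,b,c) $ 2 = b" "hparam (a,b,c) $ 3 = c" "hparam (a,b,c) $ 4 = -(a+b+c)"
  unfolding hparam_def vector_def by simp_all

lemma good_cont: "good h A \<Longrightarrow> continuous_on S h"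
  unfolding good_def using continuous_on_subset by blast
lemma good_nonneg: "good h A \<Longrightarrow> 0 \<le> h x" unfolding good_def by blast
lemma good_shift: "good h A \<Longrightarrow> \<bar>s\<bar> \<le> 3 \<Longrightarrow> integral {-1..1} (\<lambda>u. h (s + u)) \<le> A"
  unfolding good_def by blast

lemma good_minus:
  assumes "good h A" "\<bar>t\<bar> \<le> 3"
  shows "integral {-1..1} (\<lambda>a. h (t - a)) \<le> A"
proof -
  have e: "h (t - a) = h (-t + a)" for a
  proof -
    have "h (-(t - a)) = h (t - a)" using assms(1) unfolding good_def by blast
    then show ?thesis by simp
  qed
  show ?thesis unfolding e by (rule good_shift[OF assms(1)]) (use assms(2) in simp)
qed

lemma good_ker:
  assumes "i \<noteq> j" "2 \<le> n"
  shows "good (\<lambda>x. cmod (ker (Sj n j i) x)) (324 * ln (real n))"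
proof -
  define lo :: int where "lo = (if i < j then 1 else 0)"
  have lo: "lo \<in> {0,1}" "Sj n j i = {lo..int n}"
    using assms(1) unfolding lo_def Sj_def by simp_all
  show ?thesis unfolding good_def lo(2)
  proof (intro conjI allI impI)
    show "continuous_on UNIV (\<lambda>x. cmod (ker {lo..int n} x))"
      by (intro continuous_on_norm ker_cont)
    fix s :: real assume "\<bar>s\<bar> \<le> 3"
    then show "integral {-1..1} (\<lambda>u. cmod (ker {lo..int n} (s + u))) \<le> 324 * ln (real n)"
      by (rule ker_int_bound(2)[OF assms(2) lo(1)])
  qed (simp_all add: norm_ker_neg)
qed

lemma ker_Sj_same: "ker (Sj n j j) x = 1" by (simp add: Sj_def ker_def)

lemma cube_c':
  fixes P Q :: "real \<Rightarrow> real" and R :: "real \<Rightarrow> real \<Rightarrow> real \<Rightarrow> real"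
  assumes cP: "continuous_on UNIV P" and cQ: "continuous_on UNIV Q" and cR: "continuous_on UNIV (\<lambda>(a,b,c). R a b c)"
    and nP: "\<And>x. 0 \<le> P x" and nQ: "\<And>x. 0 \<le> Q x" and nR: "\<And>a b c. 0 \<le> R a b c"
    and iP: "integral {-1..1} P \<le> A" and iQ: "integral {-1..1} Q \<le> A"
    and iR: "\<And>a b. a \<in> {-1..1} \<Longrightarrow> b \<in> {-1..1} \<Longrightarrow> integral {-1..1} (\<lambda>c. R a b c) \<le> A"
  shows "integral cube (\<lambda>(a,b,c). P a * Q b * R a b c) \<le> A^3"
proof -
  have "integral cube (\<lambda>(a,b,c). P a * Q b * (\<lambda>(a,b,c). R a b c) (a,b,c)) \<le> A^3"
    by (rule cube_c[OF cP cQ cR nP nQ _ iP iQ]) (auto simp: split_def nR iR)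
  then show ?thesis by simp
qed

lemma cube_b':
  fixes P Q :: "real \<Rightarrow> real" and R :: "real \<Rightarrow> real \<Rightarrow> real \<Rightarrow> real"
  assumes cP: "continuous_on UNIV P" and cQ: "continuous_on UNIV Q" and cR: "continuous_on UNIV (\<lambda>(a,b,c). R a b c)"
    and nP: "\<And>x. 0 \<le> P x" and nQ: "\<And>x. 0 \<le> Q x" and nR: "\<And>a b c. 0 \<le> R a b c"
    and iP: "integral {-1..1} P \<le> A" and iQ: "integral {-1..1} Q \<le> A"
    and iR: "\<And>a c. a \<in> {-1..1} \<Longrightarrow> c \<in> {-1..1} \<Longrightarrow> integral {-1..1} (\<lambda>b. R a b c) \<le> A"
  shows "integral cube (\<lambda>(a,b,c). P a * Q c * R a b c) \<le> A^3"
proof -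
  have "integral cube (\<lambda>(a,b,c). P a * Q c * (\<lambda>(a,b,c). R a b c) (a,b,c)) \<le> A^3"
    by (rule cube_b[OF cP cQ cR nP nQ _ iP iQ]) (auto simp: split_def nR iR)
  then show ?thesis by simp
qed

lemma cube_a':
  fixes P Q :: "real \<Rightarrow> real" and R :: "real \<Rightarrow> real \<Rightarrow> real \<Rightarrow> real"
  assumes cP: "continuous_on UNIV P" and cQ: "continuous_on UNIV Q" and cR: "continuous_on UNIV (\<lambda>(a,b,c). R a b c)"
    and nP: "\<And>x. 0 \<le> P x" and nQ: "\<And>x. 0 \<le> Q x" and nR: "\<And>a b c. 0 \<le> R a b c"
    and iP: "integral {-1..1} P \<le> A" and iQ: "integral {-1..1} Q \<le> A"
    and iR: "\<And>b c. b \<in> {-1..1} \<Longrightarrow> c \<in> {-1..1} \<Longrightarrow> integral {-1..1} (\<lambda>a. R a b c) \<le> A"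
  shows "integral cube (\<lambda>(a,b,c). P b * Q c * R a b c) \<le> A^3"
proof -
  have "integral cube (\<lambda>(a,b,c). P b * Q c * (\<lambda>(a,b,c). R a b c) (a,b,c)) \<le> A^3"
    by (rule cube_a[OF cP cQ cR nP nQ _ iP iQ]) (auto simp: split_def nR iR)
  then show ?thesis by simp
qed

lemma prod_4: "prod f (UNIV::4 set) = f 1 * f 2 * f 3 * f 4"
  unfolding UNIV_4 by (simp add: ac_simps)

lemma kernel_cube:
  fixes g :: "4 \<Rightarrow> real \<Rightarrow> real" and t :: "real^4"
  assumes good: "\<And>i. i \<noteq> j \<Longrightarrow> good (g i) A" and gj: "\<And>x. g j x = 1"
    and tb: "\<And>i. \<bar>t$i\<bar> \<le> 3/4"
  shows "integral cube (\<lambda>x. \<Prod>i\<in>UNIV. g i ((t - hparam x)$i)) \<le> A^3"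
proof -
  have P: "(\<Prod>i\<in>UNIV. g i ((t - hparam (a,b,c))$i)) =
      g 1 (t$1 - a) * g 2 (t$2 - b) * g 3 (t$3 - c) * g 4 (t$4 + (a + b + c))" for a b c
  proof -
    have c: "(t - hparam (a,b,c))$1 = t$1 - a" "(t - hparam (a,b,c))$2 = t$2 - b"
      "(t - hparam (a,b,c))$3 = t$3 - c" "(t - hparam (a,b,c))$4 = t$4 + (a + b + c)"
      by (simp_all add: hparam_comp)
    show ?thesis unfolding prod_4 c ..
  qed
  have Pf: "(\<lambda>x. \<Prod>i\<in>UNIV. g i ((t - hparam x)$i)) =
     (\<lambda>(a,b,c). g 1 (t$1 - a) * g 2 (t$2 - b) * g 3 (t$3 - c) * g 4 (t$4 + (a + b + c)))"
  proof
    fix x :: "real \<times> real \<times> real"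
    obtain a b c where x: "x = (a,b,c)" using prod_cases3 by blast
    show "(\<Prod>i\<in>UNIV. g i ((t - hparam x)$i)) =
     (\<lambda>(a,b,c). g 1 (t$1 - a) * g 2 (t$2 - b) * g 3 (t$3 - c) * g 4 (t$4 + (a + b + c))) x"
      by (simp only: x prod.case P)
  qed
  have tb': "\<bar>t$1\<bar> \<le> 3" "\<bar>t$2\<bar> \<le> 3" "\<bar>t$3\<bar> \<le> 3" using tb[of 1] tb[of 2] tb[of 3] by linarith+
  have t4: "\<bar>t$4\<bar> \<le> 3/4" by (rule tb)
  have c4: "continuous_on UNIV (\<lambda>(a,b,c). g 4 (t$4 + (a + b + c)))" if "4 \<noteq> j"
    unfolding split_def
    by (intro continuous_on_compose2[OF good_cont[OF good[OF that]]] continuous_intros) auto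
  have i4: "integral {-1..1} (\<lambda>u. g 4 (t$4 + (v + w + u))) \<le> A"
    if "4 \<noteq> j" "v \<in> {-1..1}" "w \<in> {-1..1}" for v w
  proof -
    have "integral {-1..1} (\<lambda>u. g 4 ((t$4 + v + w) + u)) \<le> A"
      using that t4 by (intro good_shift[OF good[OF that(1)]]) auto
    then show ?thesis by (simp add: add.assoc)
  qed
  have i4': "integral {-1..1} (\<lambda>u. g 4 (t$4 + (u + v + w))) \<le> A"
    if "4 \<noteq> j" "v \<in> {-1..1}" "w \<in> {-1..1}" for v w
    using i4[OF that] by (simp add: add_ac)
  have i4'': "integral {-1..1} (\<lambda>u. g 4 (t$4 + (v + u + w))) \<le> A"
    if "4 \<noteq> j" "v \<in> {-1..1}" "w \<in> {-1..1}" for v w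
    using i4[OF that] by (simp add: add_ac)
  have cm: "continuous_on UNIV (\<lambda>a. g i (s - a))" if "i \<noteq> j" for i s
    by (intro continuous_on_compose2[OF good_cont[OF good[OF that]]] continuous_intros) auto
  have nm: "0 \<le> g i x" if "i \<noteq> j" for i x using good_nonneg[OF good[OF that]] .
  have im: "integral {-1..1} (\<lambda>a. g i (t$i - a)) \<le> A" if "i \<noteq> j" "\<bar>t$i\<bar> \<le> 3" for i
    by (rule good_minus[OF good[OF that(1)] that(2)])
  from exhaust_4[of j] consider "j = 1" | "j = 2" | "j = 3" | "j = 4" by blast
  then show ?thesis
  proof cases
    case 1
    have "integral cube (\<lambda>x. \<Prod>i\<in>UNIV. g i ((t - hparam x)$i))
        = integral cube (\<lambda>(a,b,c). g 2 (t$2 - b) * g 3 (t$3 - c) * g 4 (t$4 + (a + b + c)))"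
      unfolding Pf by (rule integral_cong) (auto simp: gj[unfolded 1])
    also have "\<dots> \<le> A^3"
      using 1 by (intro cube_a' cm c4 nm im tb' i4') auto
    finally show ?thesis .
  next
    case 2
    have "integral cube (\<lambda>x. \<Prod>i\<in>UNIV. g i ((t - hparam x)$i))
        = integral cube (\<lambda>(a,b,c). g 1 (t$1 - a) * g 3 (t$3 - c) * g 4 (t$4 + (a + b + c)))"
      unfolding Pf by (rule integral_cong) (auto simp: gj[unfolded 2])
    also have "\<dots> \<le> A^3"
      using 2 by (intro cube_b' cm c4 nm im tb' i4'') auto
    finally show ?thesis .
  next
    case 3
    have "integral cube (\<lambda>x. \<Prod>i\<in>UNIV. g i ((t - hparam x)$i))
        = integral cube (\<lambda>(a,b,c). g 1 (t$1 - a) * g 2 (t$2 - b) * g 4 (t$4 + (a + b + c)))"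
      unfolding Pf by (rule integral_cong) (auto simp: gj[unfolded 3])
    also have "\<dots> \<le> A^3"
      using 3 by (intro cube_c' cm c4 nm im tb' i4) auto
    finally show ?thesis .
  next
    case 4
    have c3: "continuous_on UNIV (\<lambda>(a,b,c). g 3 (t$3 - c))"
      unfolding split_def using 4
      by (intro continuous_on_compose2[OF good_cont[OF good]] continuous_intros) auto
    have "integral cube (\<lambda>x. \<Prod>i\<in>UNIV. g i ((t - hparam x)$i))
        = integral cube (\<lambda>(a,b,c). g 1 (t$1 - a) * g 2 (t$2 - b) * g 3 (t$3 - c))"
      unfolding Pf by (rule integral_cong) (auto simp: gj[unfolded 4])
    also have "\<dots> \<le> A^3"
      using 4 by (intro cube_c' cm c3 nm im tb') auto
    finally show ?thesis .
  qed
qed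


abbreviation "D0 \<equiv> {x. hparam x \<in> OmegaH}"

lemma hparam_comp':
  "hparam x $ 1 = fst x" "hparam x $ 2 = fst (snd x)" "hparam x $ 3 = snd (snd x)"
  "hparam x $ 4 = -(fst x + fst (snd x) + snd (snd x))"
proof -
  obtain a b c where x: "x = (a,b,c)" using prod_cases3 by blast
  show "hparam x $ 1 = fst x" "hparam x $ 2 = fst (snd x)" "hparam x $ 3 = snd (snd x)"
    "hparam x $ 4 = -(fst x + fst (snd x) + snd (snd x))" by (simp_all add: x hparam_comp)
qed

lemma cont_hcomp: "continuous_on S (\<lambda>x. hparam x $ i)"
proof -
  from exhaust_4[of i] consider "i = 1" | "i = 2" | "i = 3" | "i = 4" by blast
  then show ?thesis
  proof cases
    case 1 show ?thesis unfolding \<open>i = 1\<close> hparam_comp' by (intro continuous_intros)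
  next
    case 2 show ?thesis unfolding \<open>i = 2\<close> hparam_comp' by (intro continuous_intros)
  next
    case 3 show ?thesis unfolding \<open>i = 3\<close> hparam_comp' by (intro continuous_intros)
  next
    case 4 show ?thesis unfolding \<open>i = 4\<close> hparam_comp' by (intro continuous_intros)
  qed
qed

lemma cont_hparam: "continuous_on S hparam"
proof -
  have "continuous_on S (\<lambda>x. \<chi> i. hparam x $ i)" by (intro continuous_on_vec_lambda cont_hcomp)
  then show ?thesis by (simp add: vec_lambda_eta)
qed

lemma hparam_RH: "hparam x \<in> RH"
  by (simp add: RH_def sum_4 hparam_comp')

lemma RH_diff: "t \<in> RH \<Longrightarrow> u \<in> RH \<Longrightarrow> t - u \<in> RH"
  by (simp add: RH_def sum_subtractf)

lemma Omega_sub: "OmegaH \<subseteq> {t. (\<Sum>i\<in>UNIV. t$i) = 0 \<and> (\<forall>i j. t$i - t$j \<le> 1)}"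
proof
  fix t assume t: "t \<in> OmegaH"
  then have s: "(\<Sum>i\<in>UNIV. t$i) = 0" by (simp add: OmegaH_def RH_def)
  have H: "\<forall>(i,j)\<in>set idx_pairs. -1 < t$i - t$j \<and> t$i - t$j \<le> 1" using t by (simp add: OmegaH_def)
  have h: "\<bar>t$1 - t$2\<bar> \<le> 1" "\<bar>t$1 - t$3\<bar> \<le> 1" "\<bar>t$1 - t$4\<bar> \<le> 1"
     "\<bar>t$2 - t$3\<bar> \<le> 1" "\<bar>t$2 - t$4\<bar> \<le> 1" "\<bar>t$3 - t$4\<bar> \<le> 1"
    using H unfolding idx_pairs_def by (simp_all add: abs_le_iff)
  have "\<bar>t$i - t$j\<bar> \<le> 1" for i j
    using exhaust_4[of i] exhaust_4[of j] h by (elim disjE) (simp_all add: abs_minus_commute)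
  then have "t$i - t$j \<le> 1" for i j by (simp add: abs_le_iff)
  with s show "t \<in> {t. (\<Sum>i\<in>UNIV. t$i) = 0 \<and> (\<forall>i j. t$i - t$j \<le> 1)}" by simp
qed

lemma closed_K: "closed {t::real^4. (\<Sum>i\<in>UNIV. t$i) = 0 \<and> (\<forall>i j. t$i - t$j \<le> 1)}"
  by (intro closed_Collect_conj closed_Collect_eq closed_Collect_all closed_Collect_le continuous_intros)

lemma closure_Omega:
  assumes "t \<in> closure OmegaH"
  shows "(\<Sum>i\<in>UNIV. t$i) = 0" "\<And>i j. t$i - t$j \<le> 1"
proof -
  have "closure OmegaH \<subseteq> {t::real^4. (\<Sum>i\<in>UNIV. t$i) = 0 \<and> (\<forall>i j. t$i - t$j \<le> 1)}"
    by (rule closure_minimal[OF Omega_sub closed_K])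
  with assms show "(\<Sum>i\<in>UNIV. t$i) = 0" "\<And>i j. t$i - t$j \<le> 1" by auto
qed

lemma comp_bound:
  fixes t :: "real^4"
  assumes s: "(\<Sum>i\<in>UNIV. t$i) = 0" and d: "\<And>i j. t$i - t$j \<le> 1"
  shows "\<bar>t$k\<bar> \<le> 3/4"
proof -
  have s4: "t$1 + t$2 + t$3 + t$4 = 0" using s by (simp add: sum_4)
  have "t$1 - t$2 \<le> 1" "t$1 - t$3 \<le> 1" "t$1 - t$4 \<le> 1" "t$2 - t$1 \<le> 1" "t$2 - t$3 \<le> 1" "t$2 - t$4 \<le> 1"
    "t$3 - t$1 \<le> 1" "t$3 - t$2 \<le> 1" "t$3 - t$4 \<le> 1" "t$4 - t$1 \<le> 1" "t$4 - t$2 \<le> 1" "t$4 - t$3 \<le> 1"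
    using d by blast+
  note f = this
  have b: "\<bar>t$1\<bar> \<le> 3/4" "\<bar>t$2\<bar> \<le> 3/4" "\<bar>t$3\<bar> \<le> 3/4" "\<bar>t$4\<bar> \<le> 3/4"
    unfolding abs_le_iff using f s4 by linarith+
  show ?thesis using exhaust_4[of k] b by auto
qed

lemma closure_RH: "t \<in> closure OmegaH \<Longrightarrow> t \<in> RH"
  using closure_Omega(1) by (simp add: RH_def)

lemma closure_bound: "t \<in> closure OmegaH \<Longrightarrow> \<bar>t$k\<bar> \<le> 3/4"
  using comp_bound closure_Omega by blast

lemma D0_cube: "D0 \<subseteq> cube"
proof
  fix x assume "x \<in> D0"
  then have h: "hparam x \<in> closure OmegaH" using closure_subset by auto
  obtain a b c where x: "x = (a,b,c)" using prod_cases3 by blast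
  have "\<bar>a\<bar> \<le> 3/4" "\<bar>b\<bar> \<le> 3/4" "\<bar>c\<bar> \<le> 3/4"
    using closure_bound[OF h, of 1] closure_bound[OF h, of 2] closure_bound[OF h, of 3]
    by (simp_all add: x hparam_comp)
  then have "-1 \<le> a" "a \<le> 1" "-1 \<le> b" "b \<le> 1" "-1 \<le> c" "c \<le> 1"
    unfolding abs_le_iff by linarith+
  then show "x \<in> cube" by (simp add: x cbox_real)
qed

lemma Omega_borel: "OmegaH \<in> sets borel"
proof -
  have eq: "OmegaH = RH \<inter> (\<Inter>p\<in>set idx_pairs. {t. -1 < t$(fst p) - t$(snd p)} \<inter> {t. t$(fst p) - t$(snd p) \<le> 1})"
    unfolding OmegaH_def by (auto simp: split_beta)
  have r: "RH \<in> sets borel" unfolding RH_def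
    by (intro borel_closed closed_Collect_eq continuous_intros)
  have p: "{t::real^4. -1 < t$(fst p) - t$(snd p)} \<inter> {t. t$(fst p) - t$(snd p) \<le> 1} \<in> sets borel" for p
    by (intro sets.Int borel_open borel_closed open_Collect_less closed_Collect_le continuous_intros)
  have "(\<Inter>p\<in>set idx_pairs. {t::real^4. -1 < t$(fst p) - t$(snd p)} \<inter> {t. t$(fst p) - t$(snd p) \<le> 1}) \<in> sets borel"
    by (rule sets.finite_INT) (auto simp: idx_pairs_def p)
  then show ?thesis unfolding eq using r by (rule sets.Int[rotated])
qed

lemma D0_leb: "D0 \<in> sets lebesgue"
proof -
  have m: "hparam \<in> borel_measurable borel" by (rule borel_measurable_continuous_onI[OF cont_hparam])
  have "hparam -` OmegaH \<inter> space borel \<in> sets borel" by (rule measurable_sets[OF m Omega_borel])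
  moreover have "hparam -` OmegaH \<inter> space borel = D0" by auto
  ultimately have "D0 \<in> sets borel" by simp
  then have "D0 \<in> sets lborel" by simp
  then show ?thesis by (rule sets_completionI_sets)
qed

lemma int_D0:
  fixes g :: "real \<times> real \<times> real \<Rightarrow> 'b::euclidean_space"
  assumes "continuous_on UNIV g"
  shows "g integrable_on D0"
proof -
  have "g absolutely_integrable_on cube"
    by (rule absolutely_integrable_continuous[OF continuous_on_subset[OF assms]]) simp
  then have "g absolutely_integrable_on D0"
    by (rule set_integrable_subset[OF _ D0_leb D0_cube])
  then show ?thesis by (simp add: absolutely_integrable_on_def)
qed

lemma int_cube:
  fixes g :: "real \<times> real \<times> real \<Rightarrow> 'b::euclidean_space"
  assumes "continuous_on UNIV g"
  shows "g integrable_on cube"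
  by (rule integrable_continuous[OF continuous_on_subset[OF assms]]) simp

lemma phi_diff: "phi k (t - u) = cnj (phi k u) * phi k t"
proof -
  define A where "A = (\<Sum>i\<in>UNIV. real_of_int (k$i) * t$i)"
  define B where "B = (\<Sum>i\<in>UNIV. real_of_int (k$i) * u$i)"
  have e: "(\<Sum>i\<in>UNIV. real_of_int (k$i) * (t - u)$i) = A - B"
    unfolding A_def B_def by (simp add: right_diff_distrib sum_subtractf)
  have c: "cnj (exp (complex_of_real x * \<i>)) = exp (- (complex_of_real x * \<i>))" for x
    by (simp add: exp_cnj)
  have "cnj (phi k u) * phi k t = exp (- (complex_of_real (pi/2*B) * \<i>)) * exp (complex_of_real (pi/2*A) * \<i>)"
    unfolding phi_def A_def B_def c ..
  also have "\<dots> = exp (- (complex_of_real (pi/2*B) * \<i>) + complex_of_real (pi/2*A) * \<i>)"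
    by (rule exp_add[symmetric])
  also have "- (complex_of_real (pi/2*B) * \<i>) + complex_of_real (pi/2*A) * \<i> = complex_of_real (pi/2*(A-B)) * \<i>"
    by (simp add: algebra_simps)
  finally show ?thesis unfolding phi_def e by simp
qed

lemma cont_phi_h: "continuous_on S (\<lambda>x. phi k (hparam x))"
  unfolding phi_def by (intro continuous_intros cont_hcomp)

lemma finite_HnStar: "finite (HnStar n)"
proof -
  have "finite (SIGMA j:UNIV. PiE UNIV (Sj n j))"
    by (intro finite_SigmaI finite_PiE) (auto simp: finite_Sj)
  then show ?thesis using bij_betw_finite[OF bij_Phi] by blast
qed


lemma cont_fh: "continuous_on RH f \<Longrightarrow> continuous_on UNIV (\<lambda>x. f (hparam x))"
  by (rule continuous_on_compose2[OF _ cont_hparam]) (auto simp: hparam_RH)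

lemma H_inner_eq:
  assumes fc: "continuous_on RH f"
  shows "H_inner f (phi k) = integral D0 (\<lambda>x. f (hparam x) * cnj (phi k (hparam x)))"
proof -
  let ?g = "\<lambda>x. f (hparam x) * cnj (phi k (hparam x))"
  have cg: "continuous_on UNIV ?g" by (intro continuous_intros cont_fh[OF fc] cont_phi_h)
  have "(?g has_integral integral D0 ?g) D0" by (rule integrable_integral[OF int_D0[OF cg]])
  then have "((\<lambda>x. 2 * ?g x) has_integral 2 * integral D0 ?g) D0" by (rule has_integral_mult_right)
  then have "integral D0 (\<lambda>x. 2 * ?g x) = 2 * integral D0 ?g" by (rule integral_unique)
  then show ?thesis unfolding H_inner_def by simp
qed

lemma Sn_eq:
  assumes fc: "continuous_on RH f"
  shows "Sn n f t = integral D0 (\<lambda>x. f (hparam x) * (\<Sum>k\<in>HnStar n. phi k (t - hparam x)))"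
proof -
  have cg: "continuous_on UNIV (\<lambda>x. f (hparam x) * cnj (phi k (hparam x)) * phi k t)" for k
    by (intro continuous_intros cont_fh[OF fc] cont_phi_h)
  have "Sn n f t = (\<Sum>k\<in>HnStar n. integral D0 (\<lambda>x. f (hparam x) * cnj (phi k (hparam x)) * phi k t))"
    unfolding Sn_def
  proof (rule sum.cong[OF refl])
    fix k
    let ?g = "\<lambda>x. f (hparam x) * cnj (phi k (hparam x))"
    have cg': "continuous_on UNIV ?g" by (intro continuous_intros cont_fh[OF fc] cont_phi_h)
    have "(?g has_integral integral D0 ?g) D0" by (rule integrable_integral[OF int_D0[OF cg']])
    then have "((\<lambda>x. ?g x * phi k t) has_integral integral D0 ?g * phi k t) D0" by (rule has_integral_mult_left)
    then have "integral D0 (\<lambda>x. ?g x * phi k t) = integral D0 ?g * phi k t" by (rule integral_unique)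
    then show "H_inner f (phi k) * phi k t = integral D0 (\<lambda>x. f (hparam x) * cnj (phi k (hparam x)) * phi k t)"
      using H_inner_eq[OF fc] by simp
  qed
  also have "\<dots> = integral D0 (\<lambda>x. \<Sum>k\<in>HnStar n. f (hparam x) * cnj (phi k (hparam x)) * phi k t)"
    by (rule integral_sum[symmetric]) (auto intro: finite_HnStar int_D0[OF cg])
  also have "\<dots> = integral D0 (\<lambda>x. f (hparam x) * (\<Sum>k\<in>HnStar n. phi k (t - hparam x)))"
    by (simp add: phi_diff sum_distrib_left mult_ac)
  finally show ?thesis .
qed

lemma cont_kerh: "continuous_on UNIV (\<lambda>x. ker S ((t - hparam x)$i))"
  by (rule continuous_on_compose2[OF ker_cont[of UNIV]]) (auto intro!: continuous_intros cont_hparam)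

lemma cont_phi_th: "continuous_on S (\<lambda>x. phi k (t - hparam x))"
  unfolding phi_def by (intro continuous_intros cont_hparam)

lemma zero_Omega: "0 \<in> OmegaH"
  by (simp add: OmegaH_def RH_def idx_pairs_def)

theorem theorem3p11:
  "\<exists>c::real. \<forall>n::nat. n \<ge> 2 \<longrightarrow>
     (\<forall>f. continuous_on RH f \<and> H_periodic f \<longrightarrow>
        (\<forall>t\<in>closure OmegaH.
           cmod (Sn n f t) \<le> c * (ln (real n)) ^ 3 * (SUP s\<in>closure OmegaH. cmod (f s))))"
proof (intro exI[of _ "4 * 324^3"] allI impI ballI)
  fix n :: nat and f :: "real^4 \<Rightarrow> complex" and t :: "real^4"
  assume n: "2 \<le> n" and ff: "continuous_on RH f \<and> H_periodic f" and t: "t \<in> closure OmegaH"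
  have fc: "continuous_on RH f" using ff by blast
  define M where "M = (SUP s\<in>closure OmegaH. cmod (f s))"
  have clRH: "closure OmegaH \<subseteq> RH" using closure_RH by blast
  have bdd: "bdd_above ((\<lambda>s. cmod (f s)) ` closure OmegaH)"
  proof -
    have "closure OmegaH \<subseteq> cbox (vec (-1)) (vec 1)"
    proof
      fix s assume s: "s \<in> closure OmegaH"
      have "-1 \<le> s$i \<and> s$i \<le> 1" for i using closure_bound[OF s, of i] by (auto simp: abs_le_iff)
      then show "s \<in> cbox (vec (-1)) (vec 1)" by (simp add: mem_box_cart)
    qed
    then have "compact (closure OmegaH)"
      by (simp add: compact_eq_bounded_closed bounded_subset[OF bounded_cbox])
    moreover have "continuous_on (closure OmegaH) (\<lambda>s. cmod (f s))"
      by (intro continuous_intros continuous_on_subset[OF fc clRH])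
    ultimately have "compact ((\<lambda>s. cmod (f s)) ` closure OmegaH)" by (rule compact_continuous_image[rotated])
    then show ?thesis by (intro bounded_imp_bdd_above compact_imp_bounded)
  qed
  have Mb: "cmod (f s) \<le> M" if "s \<in> closure OmegaH" for s
    unfolding M_def by (rule cSUP_upper[OF that bdd])
  have z: "0 \<in> closure OmegaH" using zero_Omega closure_subset by blast
  have "cmod (f 0) \<le> M" by (rule Mb[OF z])
  then have M0: "0 \<le> M" using norm_ge_zero[of "f 0"] by linarith
  have tRH: "t \<in> RH" by (rule closure_RH[OF t])
  have tb: "\<bar>t$i\<bar> \<le> 3/4" for i by (rule closure_bound[OF t])
  define A where "A = 324 * ln (real n)"
  define G where "G x = (\<Sum>j\<in>UNIV. \<Prod>i\<in>UNIV. cmod (ker (Sj n j i) ((t - hparam x)$i)))" for x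
  define F where "F x = f (hparam x) * (\<Sum>k\<in>HnStar n. phi k (t - hparam x))" for x
  have cG: "continuous_on UNIV G" unfolding G_def
    by (intro continuous_intros cont_kerh)
  have cMG: "continuous_on UNIV (\<lambda>x. M * G x)" by (intro continuous_intros cG)
  have cF: "continuous_on UNIV F" unfolding F_def
    by (intro continuous_intros cont_fh[OF fc] cont_phi_th)
  have G0: "0 \<le> G x" for x unfolding G_def by (intro sum_nonneg prod_nonneg) auto
  have Fb: "cmod (F x) \<le> M * G x" if x: "x \<in> D0" for x
  proof -
    have y: "t - hparam x \<in> RH" by (rule RH_diff[OF tRH hparam_RH])
    have "cmod (\<Sum>k\<in>HnStar n. phi k (t - hparam x)) = cmod (\<Sum>j\<in>UNIV. \<Prod>i\<in>UNIV. ker (Sj n j i) ((t - hparam x)$i))"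
      by (simp add: Dn_decomp[OF y])
    also have "\<dots> \<le> (\<Sum>j\<in>UNIV. cmod (\<Prod>i\<in>UNIV. ker (Sj n j i) ((t - hparam x)$i)))" by (rule norm_sum)
    also have "\<dots> = G x" unfolding G_def by (simp add: prod_norm)
    finally have d: "cmod (\<Sum>k\<in>HnStar n. phi k (t - hparam x)) \<le> G x" .
    have "cmod (f (hparam x)) \<le> M" using x closure_subset by (intro Mb) auto
    then show ?thesis unfolding F_def norm_mult using d M0 by (intro mult_mono) auto
  qed
  have "cmod (Sn n f t) = cmod (integral D0 F)" unfolding F_def Sn_eq[OF fc] ..
  also have "\<dots> \<le> integral D0 (\<lambda>x. M * G x)"
    by (rule integral_norm_bound_integral[OF int_D0[OF cF] int_D0[OF cMG] Fb])
  also have "\<dots> \<le> integral cube (\<lambda>x. M * G x)"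
    by (rule integral_subset_le[OF D0_cube int_D0[OF cMG] int_cube[OF cMG]]) (use M0 G0 in auto)
  also have "\<dots> = M * (\<Sum>j\<in>UNIV. integral cube (\<lambda>x. \<Prod>i\<in>UNIV. cmod (ker (Sj n j i) ((t - hparam x)$i))))"
  proof -
    have ci: "continuous_on UNIV (\<lambda>x. \<Prod>i\<in>UNIV. cmod (ker (Sj n j i) ((t - hparam x)$i)))" for j
      by (intro continuous_intros cont_kerh)
    have "integral cube G = (\<Sum>j\<in>UNIV. integral cube (\<lambda>x. \<Prod>i\<in>UNIV. cmod (ker (Sj n j i) ((t - hparam x)$i))))"
      unfolding G_def by (rule integral_sum) (simp, rule int_cube[OF ci])
    moreover have "integral cube (\<lambda>x. M * G x) = M * integral cube G"
      using integral_mult[OF int_cube[OF cG], of M] by simp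
    ultimately show ?thesis by simp
  qed
  also have "\<dots> \<le> M * (\<Sum>j\<in>(UNIV::4 set). A^3)"
  proof (intro mult_left_mono[OF _ M0] sum_mono)
    fix j :: 4
    show "integral cube (\<lambda>x. \<Prod>i\<in>UNIV. cmod (ker (Sj n j i) ((t - hparam x)$i))) \<le> A^3"
    proof (rule kernel_cube[where g = "\<lambda>i x. cmod (ker (Sj n j i) x)" and j = j and t = t])
      fix i :: 4 assume "i \<noteq> j"
      then show "good (\<lambda>x. cmod (ker (Sj n j i) x)) A" unfolding A_def by (rule good_ker[OF _ n])
    next
      fix x show "cmod (ker (Sj n j j) x) = 1" by (simp add: ker_Sj_same)
    next
      fix i show "\<bar>t$i\<bar> \<le> 3/4" by (rule tb)
    qed
  qed
  also have "\<dots> = (4 * 324^3) * (ln (real n))^3 * M"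
    by (simp add: A_def power_mult_distrib)
  finally show "cmod (Sn n f t) \<le> (4 * 324^3) * (ln (real n))^3 * (SUP s\<in>closure OmegaH. cmod (f s))"
    unfolding M_def .
qed


end
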